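(* Prioritized planning with any given priority ordering is incomplete for the class of P-solvable MAPF instances: for every integer $M\ge 2$ and every strict partial order $\prec$ on $\{1,\dots,M\}$, there exists a P-solvable MAPF instance with agents $a_1,\dots,a_M$ such that prioritized planning with $\prec$ does not result in a solution.
   Context: A MAPF instance consists of a connected undirected graph $G=(V,E)$ and $M$ agents $a_1,\dots,a_M$; agent $a_i$ has a start vertex $s_i$ and a target vertex $t_i$, and start vertices are pairwise distinct, as are target vertices. Time is discrete; at each time step every agent either moves to an adjacent vertex or waits. A path for $a_i$ is a sequence $\pi_i=\langle \pi_i(0),\pi_i(1),\dots\rangle$ with $\pi_i(0)=s_i$, consecutive vertices equal or adjacent, and $\pi_i(t)=t_i$ for all $t\ge T_i$, where the arrival time $T_i$ is the least such time. Two agents collide if they occupy the same vertex at the same time, or traverse the same edge in opposite directions at the same time step. A solution is a collision-free set of paths, one per agent. A priority ordering is a strict partial order $\prec$ on $\{1,\dots,M\}$ ($a_i$ has higher priority than $a_j$ iff $i\prec j$). A solution $\{\pi_i\}$ is consistent with $\prec$ if higher priority agents never wait for lower priority agents, i.e. for every $i$ the arrival time $T_i$ of $\pi_i$ equals the minimum arrival time over all paths for $a_i$ that do not collide with any $\pi_k$ with $k\prec i$. A MAPF instance is P-solvable iff it has a solution consistent with some priority ordering. Prioritized planning with $\prec$: agents are processed in an order compatible with $\prec$; each agent $a_j$ is assigned a path of minimum arrival time among paths that do not collide with the already computed paths of all $a_k$ with $k\prec j$ (ties broken arbitrarily); it fails if some agent has no such path, and otherwise results in a solution iff the resulting plan is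 collision-free. *)

theory Defs
  imports Main
begin

text \<open>A MAPF instance: vertices (natural numbers), undirected edges (stored symmetrically),
start and target vertex of each agent. Agents are numbered 1..M.\<close>

record mapf =
  verts  :: "nat set"
  edges  :: "(nat \<times> nat) set"
  start  :: "nat \<Rightarrow> nat"
  target :: "nat \<Rightarrow> nat"

definition connected_graph :: "nat set \<Rightarrow> (nat \<times> nat) set \<Rightarrow> bool" where
  "connected_graph V E \<longleftrightarrow> V \<noteq> {} \<and> finite V \<and> E \<subseteq> V \<times> V \<and> sym E \<and> irrefl E
     \<and> (\<forall>u\<in>V. \<forall>v\<in>V. (u, v) \<in> E\<^sup>*)"

definition valid_instance :: "mapf \<Rightarrow> nat \<Rightarrow> bool" where
  "valid_instance I M \<longleftrightarrow> connected_graph (verts I) (edges I)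
     \<and> (\<forall>i\<in>{1..M}. start I i \<in> verts I \<and> target I i \<in> verts I)
     \<and> inj_on (start I) {1..M} \<and> inj_on (target I) {1..M}"

definition is_path :: "mapf \<Rightarrow> nat \<Rightarrow> (nat \<Rightarrow> nat) \<Rightarrow> bool" where
  "is_path I i p \<longleftrightarrow> p 0 = start I i \<and> (\<forall>t. p t \<in> verts I)
     \<and> (\<forall>t. p (Suc t) = p t \<or> (p t, p (Suc t)) \<in> edges I)
     \<and> (\<exists>T. \<forall>t\<ge>T. p t = target I i)"

definition arrival :: "mapf \<Rightarrow> nat \<Rightarrow> (nat \<Rightarrow> nat) \<Rightarrow> nat" where
  "arrival I i p = (LEAST T. \<forall>t\<ge>T. p t = target I i)"

definition collide :: "(nat \<Rightarrow> nat) \<Rightarrow> (nat \<Rightarrow> nat) \<Rightarrow> bool" where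
  "collide p q \<longleftrightarrow> (\<exists>t. p t = q t
      \<or> (p t \<noteq> p (Suc t) \<and> p t = q (Suc t) \<and> p (Suc t) = q t))"

definition is_solution :: "mapf \<Rightarrow> nat \<Rightarrow> (nat \<Rightarrow> nat \<Rightarrow> nat) \<Rightarrow> bool" where
  "is_solution I M \<Pi> \<longleftrightarrow> (\<forall>i\<in>{1..M}. is_path I i (\<Pi> i))
     \<and> (\<forall>i\<in>{1..M}. \<forall>j\<in>{1..M}. i \<noteq> j \<longrightarrow> \<not> collide (\<Pi> i) (\<Pi> j))"

text \<open>Strict partial order on {1..M}; (k, i) \<in> P means k \<prec> i (k has higher priority).\<close>
definition strict_po_on :: "nat \<Rightarrow> (nat \<times> nat) set \<Rightarrow> bool" where
  "strict_po_on M P \<longleftrightarrow> P \<subseteq> {1..M} \<times> {1..M} \<and> irrefl P \<and> trans P"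

definition avoids :: "mapf \<Rightarrow> (nat \<times> nat) set \<Rightarrow> (nat \<Rightarrow> nat \<Rightarrow> nat) \<Rightarrow> nat
    \<Rightarrow> (nat \<Rightarrow> nat) \<Rightarrow> bool" where
  "avoids I P \<Pi> i p \<longleftrightarrow> is_path I i p \<and> (\<forall>k. (k, i) \<in> P \<longrightarrow> \<not> collide p (\<Pi> k))"

definition min_arrival :: "mapf \<Rightarrow> (nat \<times> nat) set \<Rightarrow> (nat \<Rightarrow> nat \<Rightarrow> nat) \<Rightarrow> nat \<Rightarrow> nat" where
  "min_arrival I P \<Pi> i = (LEAST T. \<exists>p. avoids I P \<Pi> i p \<and> arrival I i p = T)"

definition consistent :: "mapf \<Rightarrow> nat \<Rightarrow> (nat \<times> nat) set \<Rightarrow> (nat \<Rightarrow> nat \<Rightarrow> nat) \<Rightarrow> bool" where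
  "consistent I M P \<Pi> \<longleftrightarrow> (\<forall>i\<in>{1..M}. arrival I i (\<Pi> i) = min_arrival I P \<Pi> i)"

definition P_solvable :: "mapf \<Rightarrow> nat \<Rightarrow> bool" where
  "P_solvable I M \<longleftrightarrow> (\<exists>P \<Pi>. strict_po_on M P \<and> is_solution I M \<Pi> \<and> consistent I M P \<Pi>)"

definition compatible_order :: "nat \<Rightarrow> (nat \<times> nat) set \<Rightarrow> nat list \<Rightarrow> bool" where
  "compatible_order M P \<sigma> \<longleftrightarrow> distinct \<sigma> \<and> set \<sigma> = {1..M}
     \<and> (\<forall>a<length \<sigma>. \<forall>b<length \<sigma>. (\<sigma> ! b, \<sigma> ! a) \<in> P \<longrightarrow> b < a)"

definition pp_step :: "mapf \<Rightarrow> (nat \<times> nat) set \<Rightarrow> (nat \<Rightarrow> nat \<Rightarrow> nat) \<Rightarrow> nat \<Rightarrow> bool" where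
  "pp_step I P \<Pi> j \<longleftrightarrow> avoids I P \<Pi> j (\<Pi> j)
     \<and> (\<forall>p. avoids I P \<Pi> j p \<longrightarrow> arrival I j (\<Pi> j) \<le> arrival I j p)"

text \<open>Some run of prioritized planning with P (some compatible order, some tie-breaking,
no failure) produces a collision-free plan.\<close>
definition pp_results_in_solution :: "mapf \<Rightarrow> nat \<Rightarrow> (nat \<times> nat) set \<Rightarrow> bool" where
  "pp_results_in_solution I M P \<longleftrightarrow> (\<exists>\<sigma> \<Pi>. compatible_order M P \<sigma>
     \<and> (\<forall>j\<in>{1..M}. pp_step I P \<Pi> j) \<and> is_solution I M \<Pi>)"

end

theory Submission
  imports Defs
begin

definition EE :: "nat \<Rightarrow> (nat \<times> nat) set" where
  "EE M = {(x,y). x \<in> {0..M+3} \<and> y \<in> {0..M+3} \<and> x \<noteq> y \<and> (x = 1 \<or> y = 1)}"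

definition inst :: "nat \<Rightarrow> nat \<Rightarrow> nat \<Rightarrow> mapf" where
  "inst a b M = \<lparr>verts = {0..M+3}, edges = EE M,
     start = (\<lambda>i. if i = a then 0 else if i = b then 1 else i+3),
     target = (\<lambda>i. if i = a then 2 else if i = b then 1 else i+3)\<rparr>"

lemma arrival_le:
  assumes "\<forall>t\<ge>n. p t = target I i" shows "arrival I i p \<le> n"
  unfolding arrival_def using assms by (rule Least_le)

lemma arrival_prop:
  assumes "is_path I i p" shows "\<forall>t\<ge>arrival I i p. p t = target I i"
proof -
  from assms obtain T where "\<forall>t\<ge>T. p t = target I i" by (auto simp: is_path_def)
  then show ?thesis unfolding arrival_def by (rule LeastI)
qed

lemma valid:
  assumes "a \<noteq> b" "a \<in> {1..M}" "b \<in> {1..M}"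
  shows "valid_instance (inst a b M) M"
proof -
  have cg: "connected_graph {0..M+3} (EE M)"
    unfolding connected_graph_def
  proof (intro conjI)
    show "EE M \<subseteq> {0..M+3} \<times> {0..M+3}" by (auto simp: EE_def)
    show "sym (EE M)" by (auto simp: EE_def sym_def)
    show "irrefl (EE M)" by (auto simp: EE_def irrefl_def)
    show "\<forall>u\<in>{0..M+3}. \<forall>v\<in>{0..M+3}. (u, v) \<in> (EE M)\<^sup>*"
    proof (intro ballI)
      fix u v assume u: "u \<in> {0..M+3}" and v: "v \<in> {0..M+3}"
      have "(u,1) \<in> (EE M)\<^sup>*"
        using u by (cases "u = 1") (auto simp: EE_def intro!: r_into_rtrancl)
      moreover have "(1,v) \<in> (EE M)\<^sup>*"
        using v by (cases "v = 1") (auto simp: EE_def intro!: r_into_rtrancl)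
      ultimately show "(u, v) \<in> (EE M)\<^sup>*" by simp
    qed
  qed auto
  have i1: "inj_on (start (inst a b M)) {1..M}"
    unfolding inj_on_def inst_def using assms by auto
  have i2: "inj_on (target (inst a b M)) {1..M}"
    unfolding inj_on_def inst_def using assms by auto
  have i3: "\<forall>i\<in>{1..M}. start (inst a b M) i \<in> verts (inst a b M) \<and> target (inst a b M) i \<in> verts (inst a b M)"
    by (auto simp: inst_def)
  show ?thesis unfolding valid_instance_def using cg i1 i2 i3 by (simp add: inst_def)
qed

lemma path_hits_1:
  assumes "a \<noteq> b" and "is_path (inst a b M) a p" shows "\<exists>t. p t = 1"
proof (rule ccontr)
  assume n: "\<not> (\<exists>t. p t = 1)"
  have "p t = 0" for t
  proof (induction t)
    case 0 then show ?case using assms by (simp add: is_path_def inst_def)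
  next
    case (Suc t)
    have "p (Suc t) = p t \<or> (p t, p (Suc t)) \<in> EE M"
      using assms(2) by (simp add: is_path_def inst_def)
    then show ?case using Suc n by (auto simp: EE_def)
  qed
  moreover obtain T where "\<forall>t\<ge>T. p t = target (inst a b M) a"
    using assms(2) by (auto simp: is_path_def)
  ultimately show False by (auto simp: inst_def)
qed


definition sol :: "nat \<Rightarrow> nat \<Rightarrow> nat \<Rightarrow> nat \<Rightarrow> nat" where
  "sol a b = (\<lambda>i t. if i = a then (if t = 0 then 0 else if t = 1 then 1 else 2)
     else if i = b then (if t = 1 then 3 else 1) else i+3)"

lemma sol_path:
  assumes "a \<noteq> b" "i \<in> {1..M}"
  shows "is_path (inst a b M) i (sol a b i)"
proof -
  have "\<forall>t\<ge>2. sol a b i t = target (inst a b M) i"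
    using assms by (auto simp: sol_def inst_def)
  moreover have "\<forall>t. sol a b i (Suc t) = sol a b i t \<or> (sol a b i t, sol a b i (Suc t)) \<in> EE M"
    using assms by (auto simp: sol_def EE_def)
  moreover have "\<forall>t. sol a b i t \<in> {0..M+3}"
    using assms by (auto simp: sol_def)
  ultimately show ?thesis using assms unfolding is_path_def by (auto simp: inst_def sol_def)
qed

lemma sol_nocoll:
  assumes "a \<noteq> b" "i \<in> {1..M}" "j \<in> {1..M}" "i \<noteq> j"
  shows "\<not> collide (sol a b i) (sol a b j)"
  using assms unfolding collide_def sol_def by auto

lemma arr_a_ge:
  assumes "a \<noteq> b" "is_path (inst a b M) a p" shows "2 \<le> arrival (inst a b M) a p"
proof (rule ccontr)
  assume "\<not> 2 \<le> arrival (inst a b M) a p"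
  then have "p 1 = 2" using arrival_prop[OF assms(2)] assms(1) by (auto simp: inst_def)
  moreover have "p 0 = 0" using assms by (simp add: is_path_def inst_def)
  moreover have "p (Suc 0) = p 0 \<or> (p 0, p (Suc 0)) \<in> EE M"
  proof -
    have "\<forall>t. p (Suc t) = p t \<or> (p t, p (Suc t)) \<in> EE M"
      using assms(2) unfolding is_path_def inst_def by simp
    then show ?thesis by blast
  qed
  ultimately show False by (auto simp: EE_def)
qed

lemma solvable:
  assumes "a \<noteq> b" "a \<in> {1..M}" "b \<in> {1..M}"
  shows "P_solvable (inst a b M) M"
proof -
  let ?I = "inst a b M" and ?P = "{(a,b)}" and ?S = "sol a b"
  have po: "strict_po_on M ?P" using assms
    by (auto simp: strict_po_on_def irrefl_def trans_def)
  have so: "is_solution ?I M ?S"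
    unfolding is_solution_def using sol_path sol_nocoll assms by blast
  have arr_a: "arrival ?I a (?S a) = 2"
  proof -
    have "arrival ?I a (?S a) \<le> 2" by (rule arrival_le) (auto simp: sol_def inst_def)
    then show ?thesis using arr_a_ge[OF assms(1) sol_path[OF assms(1) assms(2)]] by simp
  qed
  have arr_b: "arrival ?I b (?S b) = 2"
  proof -
    have "arrival ?I b (?S b) \<le> 2" by (rule arrival_le) (use assms in \<open>auto simp: sol_def inst_def\<close>)
    moreover have "\<not> arrival ?I b (?S b) \<le> 1"
    proof
      assume "arrival ?I b (?S b) \<le> 1"
      then have "?S b 1 = 1" using arrival_prop[OF sol_path[OF assms(1) assms(3)]] assms(1)
        by (auto simp: inst_def)
      then show False using assms(1) by (simp add: sol_def)
    qed
    ultimately show ?thesis by simp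
  qed
  have cons: "arrival ?I i (?S i) = min_arrival ?I ?P ?S i" if i: "i \<in> {1..M}" for i
  proof -
    have av: "avoids ?I ?P ?S i (?S i)"
      unfolding avoids_def using sol_path[OF assms(1) i] sol_nocoll[OF assms(1) i] assms i by auto
    consider "i = a" | "i = b" | "i \<noteq> a" "i \<noteq> b" by blast
    then show ?thesis
    proof cases
      case 1
      show ?thesis unfolding min_arrival_def
      proof (rule sym, rule Least_equality)
        show "\<exists>p. avoids ?I ?P ?S i p \<and> arrival ?I i p = arrival ?I i (?S i)" using av by blast
        show "arrival ?I i (?S i) \<le> y" if "\<exists>p. avoids ?I ?P ?S i p \<and> arrival ?I i p = y" for y
          using that arr_a arr_a_ge[OF assms(1)] 1 by (auto simp: avoids_def)
      qed
    next
      case 2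
      show ?thesis unfolding min_arrival_def
      proof (rule sym, rule Least_equality)
        show "\<exists>p. avoids ?I ?P ?S i p \<and> arrival ?I i p = arrival ?I i (?S i)" using av by blast
        show "arrival ?I i (?S i) \<le> y" if hy: "\<exists>p. avoids ?I ?P ?S i p \<and> arrival ?I i p = y" for y
        proof -
          obtain p where p: "avoids ?I ?P ?S b p" "arrival ?I b p = y" using hy 2 by blast
          have pp: "is_path ?I b p" and nc: "\<not> collide p (?S a)" using p by (auto simp: avoids_def)
          have "\<not> y \<le> 1"
          proof
            assume "y \<le> 1"
            then have "p 1 = 1" using arrival_prop[OF pp] p(2) assms(1) by (auto simp: inst_def)
            moreover have "?S a 1 = 1" by (simp add: sol_def)
            ultimately have "collide p (?S a)" unfolding collide_def by metis
            then show False using nc by simp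
          qed
          then show ?thesis using arr_b 2 by simp
        qed
      qed
    next
      case 3
      have "arrival ?I i (?S i) \<le> 0" by (rule arrival_le) (use 3 in \<open>auto simp: sol_def inst_def\<close>)
      then have z: "arrival ?I i (?S i) = 0" by simp
      show ?thesis unfolding min_arrival_def z
        by (rule sym, rule Least_equality) (use av z in auto)
    qed
  qed
  show ?thesis unfolding P_solvable_def consistent_def using po so cons by blast
qed


lemma not_pp:
  assumes po: "strict_po_on M P" and ab: "a \<noteq> b" "a \<in> {1..M}" "b \<in> {1..M}" "(a,b) \<notin> P"
  shows "\<not> pp_results_in_solution (inst a b M) M P"
proof
  let ?I = "inst a b M"
  assume "pp_results_in_solution ?I M P"
  then obtain \<Pi> where st: "\<forall>j\<in>{1..M}. pp_step ?I P \<Pi> j" and so: "is_solution ?I M \<Pi>"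
    unfolding pp_results_in_solution_def by blast
  have sub: "P \<subseteq> {1..M} \<times> {1..M}" and irr: "irrefl P" and tr: "trans P"
    using po by (auto simp: strict_po_on_def)
  have fin: "finite P" using sub finite_subset by blast
  have "acyclic P" unfolding acyclic_def using irr tr by (simp add: irrefl_def trancl_id)
  then have wf: "wf P" using fin finite_acyclic_wf by blast
  have D: "\<forall>t. \<Pi> j t = target ?I j" if "j \<in> {1..M}" "j \<noteq> a" "(a,j) \<notin> P" for j
    using that
  proof (induction j rule: wf_induct[OF wf])
    case (1 j)
    let ?q = "\<lambda>t. target ?I j"
    have qp: "is_path ?I j ?q" unfolding is_path_def using 1(2,3) by (auto simp: inst_def)
    have "\<not> collide ?q (\<Pi> k)" if k: "(k,j) \<in> P" for k
    proof -
      have kM: "k \<in> {1..M}" using k sub by auto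
      have ka: "k \<noteq> a" using k 1(4) by auto
      have ak: "(a,k) \<notin> P" using k 1(4) tr by (meson transD)
      have kj: "k \<noteq> j" using k irr by (auto simp: irrefl_def)
      have "\<forall>t. \<Pi> k t = target ?I k" using 1(1) k kM ka ak by blast
      moreover have "target ?I k \<noteq> target ?I j" using kj ka 1(3) by (auto simp: inst_def)
      ultimately show ?thesis unfolding collide_def by auto
    qed
    then have av: "avoids ?I P \<Pi> j ?q" unfolding avoids_def using qp by blast
    have "arrival ?I j ?q \<le> 0" by (rule arrival_le) simp
    moreover have "pp_step ?I P \<Pi> j" using st 1(2) by blast
    ultimately have "arrival ?I j (\<Pi> j) \<le> 0" and "is_path ?I j (\<Pi> j)"
      using av unfolding pp_step_def avoids_def by force+
    then show ?case using arrival_prop by fastforce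
  qed
  have Db: "\<forall>t. \<Pi> b t = 1" using D[of b] ab by (auto simp: inst_def)
  have "is_path ?I a (\<Pi> a)" using st ab unfolding pp_step_def avoids_def by blast
  then obtain t where "\<Pi> a t = 1" using path_hits_1 ab(1) by blast
  then have "collide (\<Pi> a) (\<Pi> b)" using Db unfolding collide_def by metis
  then show False using so ab unfolding is_solution_def by blast
qed

theorem theorem2:
  fixes M :: nat and P :: "(nat \<times> nat) set"
  assumes "M \<ge> 2" and "strict_po_on M P"
  shows "\<exists>I. valid_instance I M \<and> P_solvable I M \<and> \<not> pp_results_in_solution I M P"
proof -
  have irr: "irrefl P" and tr: "trans P" using assms(2) by (auto simp: strict_po_on_def)
  have r: "\<exists>I. valid_instance I M \<and> P_solvable I M \<and> \<not> pp_results_in_solution I M P"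
    if "a \<noteq> b" "a \<in> {1..M}" "b \<in> {1..M}" "(a,b) \<notin> P" for a b
    using valid[OF that(1-3)] solvable[OF that(1-3)] not_pp[OF assms(2) that] by blast
  show ?thesis
  proof (cases "(1::nat,2::nat) \<in> P")
    case True
    then have "(2::nat,1::nat) \<notin> P" using irr tr by (meson irrefl_def transD)
    then show ?thesis using r[of 2 1] assms(1) by auto
  next
    case False
    then show ?thesis using r[of 1 2] assms(1) by auto
  qed
qed

end
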